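(* Let $\beta>0$ and $f\in\mathcal H_B^\beta$, and let $a=a(\beta)>0$ be any constant satisfying $(e^a-1)+a^\beta/(\lfloor\beta\rfloor!)\le1/2$. Then for all $x\in[0,1]$ and $h$ with $x+h\in[0,1]$ and $$|h|\le a\Big(\frac{\min(f(x),1-f(x))}{\|f\|_{\mathcal H_B^\beta}}\Big)^{1/\beta},$$ we have $$|f(x+h)-f(x)|=|(1-f(x))-(1-f(x+h))|\le\tfrac12\min(f(x),1-f(x)),$$ and in particular $$\tfrac14f(x)(1-f(x))\le f(x+h)(1-f(x+h))\le\tfrac94f(x)(1-f(x)).$$
   Context: For $\beta>0$, $\lfloor\beta\rfloor$ is the greatest integer strictly smaller than $\beta$. $\|f\|_{C^\beta([0,1])}=\|f\|_\infty+\|f^{(\lfloor\beta\rfloor)}\|_\infty+\sup_{x\ne y}|f^{(\lfloor\beta\rfloor)}(x)-f^{(\lfloor\beta\rfloor)}(y)|/|x-y|^{\beta-\lfloor\beta\rfloor}$. For a function $g$, $|g|_{\mathcal H^\beta}=\max_{1\le j<\beta}\big(\sup_{x\in[0,1]}|g^{(j)}(x)|^\beta/|g(x)|^{\beta-j}\big)^{1/j}$, with $0/0:=0$ and $|g|_{\mathcal H^\beta}=0$ if $\beta\le1$. $\mathcal H_B^\beta=\{f:[0,1]\to[0,1]:\ \|f\|_{\mathcal H_B^\beta}:=\|f\|_{C^\beta([0,1])}+|f|_{\mathcal H^\beta}+|1-f|_{\mathcal H^\beta}<\infty\}$. *)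

theory Defs
  imports "HOL-Analysis.Analysis"
begin

text \<open>The paper's floor: the greatest integer strictly smaller than beta (beta > 0).\<close>
definition flr :: "real \<Rightarrow> nat" where
  "flr \<beta> = nat (\<lceil>\<beta>\<rceil> - 1)"

text \<open>D 0 = f on [0,1] and D (j+1) is the derivative (within [0,1]) of D j, for j < m.
  Derivatives within [0,1] are unique on [0,1], so D is determined by f there.\<close>
definition derivs_on :: "(nat \<Rightarrow> real \<Rightarrow> real) \<Rightarrow> nat \<Rightarrow> (real \<Rightarrow> real) \<Rightarrow> bool" where
  "derivs_on D m f \<longleftrightarrow> (\<forall>x\<in>{0..1}. D 0 x = f x) \<and>
     (\<forall>j<m. \<forall>x\<in>{0..1}. (D j has_real_derivative D (Suc j) x) (at x within {0..1}))"

definition sup_norm :: "(real \<Rightarrow> real) \<Rightarrow> ereal" where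
  "sup_norm g = (SUP x\<in>{0..1}. ereal \<bar>g x\<bar>)"

definition C_norm :: "real \<Rightarrow> (nat \<Rightarrow> real \<Rightarrow> real) \<Rightarrow> ereal" where
  "C_norm \<beta> D = sup_norm (D 0) + sup_norm (D (flr \<beta>)) +
     (SUP p\<in>{(x,y). x\<in>{0..1} \<and> y\<in>{0..1} \<and> x \<noteq> y}.
        ereal (\<bar>D (flr \<beta>) (fst p) - D (flr \<beta>) (snd p)\<bar> / \<bar>fst p - snd p\<bar> powr (\<beta> - real (flr \<beta>))))"

definition H_ratio :: "real \<Rightarrow> real \<Rightarrow> real \<Rightarrow> real \<Rightarrow> ereal" where
  "H_ratio \<beta> j dj g0 = (if g0 = 0 then (if dj = 0 then 0 else \<infinity>)
       else ereal (\<bar>dj\<bar> powr \<beta> / \<bar>g0\<bar> powr (\<beta> - j)))"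

definition eroot :: "ereal \<Rightarrow> real \<Rightarrow> ereal" where
  "eroot e r = (if e = \<infinity> then \<infinity> else ereal (real_of_ereal e powr r))"

text \<open>|g|_{H^beta}, where G j is the j-th derivative of g; equals 0 when beta \<le> 1 (empty max).\<close>
definition H_semi :: "real \<Rightarrow> (nat \<Rightarrow> real \<Rightarrow> real) \<Rightarrow> ereal" where
  "H_semi \<beta> G = Sup ({0} \<union> (\<lambda>j. eroot (SUP x\<in>{0..1}. H_ratio \<beta> (real j) (G j x) (G 0 x)) (1 / real j))
        ` {j::nat. 1 \<le> j \<and> real j < \<beta>})"

definition one_minus :: "(nat \<Rightarrow> real \<Rightarrow> real) \<Rightarrow> nat \<Rightarrow> real \<Rightarrow> real" where
  "one_minus D j x = (if j = 0 then 1 - D 0 x else - D j x)"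

definition HB_norm :: "real \<Rightarrow> (nat \<Rightarrow> real \<Rightarrow> real) \<Rightarrow> ereal" where
  "HB_norm \<beta> D = C_norm \<beta> D + H_semi \<beta> D + H_semi \<beta> (one_minus D)"

definition in_HB :: "real \<Rightarrow> (real \<Rightarrow> real) \<Rightarrow> (nat \<Rightarrow> real \<Rightarrow> real) \<Rightarrow> bool" where
  "in_HB \<beta> f D \<longleftrightarrow> derivs_on D (flr \<beta>) f \<and> (\<forall>x\<in>{0..1}. f x \<in> {0..1}) \<and> HB_norm \<beta> D < \<infinity>"

end

theory Submission imports Defs begin

lemma taylor_fwd:
  fixes Df :: "nat \<Rightarrow> real \<Rightarrow> real"
  assumes k: "k > 0" and ab: "a \<le> b"
    and der: "\<And>m t. m < k \<Longrightarrow> a \<le> t \<Longrightarrow> t \<le> b \<Longrightarrow>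
        (Df m has_real_derivative Df (Suc m) t) (at t within {a..b})"
    and C: "\<And>t. a \<le> t \<Longrightarrow> t \<le> b \<Longrightarrow> \<bar>Df k t - Df k a\<bar> \<le> C"
  shows "\<bar>Df 0 b - (\<Sum>i\<le>k. (b-a)^i / fact i * Df i a)\<bar> \<le> C * (b-a)^k / fact k"
proof -
  define g where "g t = (b - t) ^ (k - 1) / fact (k - 1)" for t :: real
  have I: "((\<lambda>t. g t * Df k t) has_integral Df 0 b - (\<Sum>i<k. ((b-a) ^ i / fact i) * Df i a)) {a..b}"
    using Taylor_has_integral[of k Df "Df 0" a b] k ab der
    by (auto simp: g_def has_real_derivative_iff_has_vector_derivative)
  have G: "(g has_integral (b-a)^k / fact k) {a..b}"
  proof -
    have "((\<lambda>s. -((b - s)^k / fact k)) has_real_derivative g t) (at t within {a..b})" for t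
    proof -
      have "((\<lambda>s. -((b - s)^k / fact k)) has_real_derivative (- (real k * (b - t)^(k-1) * (-1)) / fact k)) (at t within {a..b})"
        by (auto intro!: derivative_eq_intros)
      moreover have "(- (real k * (b - t)^(k-1) * (-1)) / fact k) = g t"
        proof -
        obtain n where n: "k = Suc n" using k by (cases k) auto
        have "fact k = real k * fact n" by (simp add: n)
        then show ?thesis by (simp add: g_def n)
      qed
      ultimately show ?thesis by simp
    qed
    note dd = this
    from fundamental_theorem_of_calculus[OF ab, of "\<lambda>s. -((b - s)^k / fact k)" g]
    show ?thesis using dd k by (auto simp: has_real_derivative_iff_has_vector_derivative zero_power)
  qed
  have gnn: "t \<in> {a..b} \<Longrightarrow> 0 \<le> g t" for t by (auto simp: g_def)
  have I2: "((\<lambda>t. g t * (Df k t - Df k a)) has_integral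
      (Df 0 b - (\<Sum>i<k. ((b-a) ^ i / fact i) * Df i a)) - (b-a)^k / fact k * Df k a) {a..b}"
    using has_integral_diff[OF I has_integral_mult_left[OF G, of "Df k a"]]
    by (simp add: algebra_simps)
  have GC: "((\<lambda>t. g t * C) has_integral (b-a)^k / fact k * C) {a..b}"
    using has_integral_mult_left[OF G] .
  have GC2: "((\<lambda>t. - (g t * C)) has_integral - ((b-a)^k / fact k * C)) {a..b}"
    using has_integral_neg[OF GC] .
  have le1: "g t * (Df k t - Df k a) \<le> g t * C" if "t \<in> {a..b}" for t
    using gnn[OF that] C[of t] that by (intro mult_left_mono) auto
  have le2: "- (g t * C) \<le> g t * (Df k t - Df k a)" if "t \<in> {a..b}" for t
  proof -
    have "g t * (- C) \<le> g t * (Df k t - Df k a)"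
      using gnn[OF that] C[of t] that by (intro mult_left_mono) auto
    then show ?thesis by simp
  qed
  have sp: "(\<Sum>i\<le>k. (b-a)^i / fact i * Df i a) = (\<Sum>i<k. (b-a)^i / fact i * Df i a) + (b-a)^k / fact k * Df k a"
    by (simp add: lessThan_Suc_atMost[symmetric])
  show ?thesis
    using has_integral_le[OF I2 GC le1] has_integral_le[OF GC2 I2 le2] unfolding sp
    by (simp add: abs_le_iff algebra_simps)
qed

lemma taylor_two:
  fixes D :: "nat \<Rightarrow> real \<Rightarrow> real"
  assumes k: "k > 0"
    and der: "\<And>m t. m < k \<Longrightarrow> t \<in> {0..1} \<Longrightarrow>
        (D m has_real_derivative D (Suc m) t) (at t within {0..1})"
    and x: "x \<in> {0..1}" and y: "y \<in> {0..1}"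
    and C: "\<And>t. t \<in> {0..1} \<Longrightarrow> \<bar>t - x\<bar> \<le> \<bar>y - x\<bar> \<Longrightarrow> \<bar>D k t - D k x\<bar> \<le> C"
  shows "\<bar>D 0 y - (\<Sum>i\<le>k. (y-x)^i / fact i * D i x)\<bar> \<le> C * \<bar>y-x\<bar>^k / fact k"
proof (cases "x \<le> y")
  case True
  have "\<bar>D 0 y - (\<Sum>i\<le>k. (y-x)^i / fact i * D i x)\<bar> \<le> C * (y-x)^k / fact k"
  proof (rule taylor_fwd[OF k True])
    fix m t assume "m < k" "x \<le> t" "t \<le> y"
    then show "(D m has_real_derivative D (Suc m) t) (at t within {x..y})"
      using der[of m t] x y by (auto intro: has_field_derivative_subset)
  next
    fix t assume "x \<le> t" "t \<le> y"
    then show "\<bar>D k t - D k x\<bar> \<le> C" using C[of t] x y by auto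
  qed
  then show ?thesis using True by simp
next
  case False
  define Df where "Df m t = (-1)^m * D m (x + y - t)" for m t
  have "\<bar>Df 0 x - (\<Sum>i\<le>k. (x-y)^i / fact i * Df i y)\<bar> \<le> C * (x-y)^k / fact k"
  proof (rule taylor_fwd[OF k])
    show "y \<le> x" using False by simp
  next
    fix m t assume m: "m < k" and t: "y \<le> t" "t \<le> x"
    have s01: "x + y - t \<in> {0..1}" using t x y by auto
    have img: "(\<lambda>t. x + y - t) ` {y..x} \<subseteq> {0..1}" using x y by auto
    have d1: "(D m has_real_derivative D (Suc m) (x + y - t)) (at ((\<lambda>t. x + y - t) t) within ((\<lambda>t. x + y - t) ` {y..x}))"
      using has_field_derivative_subset[OF der[OF m s01] img] by simp
    have d2: "((\<lambda>t. x + y - t) has_real_derivative -1) (at t within {y..x})"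
      by (auto intro!: derivative_eq_intros)
    have d3: "((\<lambda>t. D m (x + y - t)) has_real_derivative D (Suc m) (x + y - t) * -1) (at t within {y..x})"
      using DERIV_image_chain[OF d1 d2] by (simp add: o_def)
    have d4: "((\<lambda>t. (-1)^m * D m (x + y - t)) has_real_derivative (-1)^m * (D (Suc m) (x + y - t) * -1)) (at t within {y..x})"
      by (rule DERIV_cmult[OF d3])
    show "(Df m has_real_derivative Df (Suc m) t) (at t within {y..x})"
      using d4 unfolding Df_def[abs_def] by simp
  next
    fix t assume t: "y \<le> t" "t \<le> x"
    have "\<bar>D k (x + y - t) - D k x\<bar> \<le> C" using C[of "x + y - t"] t x y by auto
    then show "\<bar>Df k t - Df k y\<bar> \<le> C"
      by (simp add: Df_def abs_mult power_abs right_diff_distrib[symmetric])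
  qed
  moreover have "Df 0 x = D 0 y" by (simp add: Df_def)
  moreover have "(x-y)^i / fact i * Df i y = (y-x)^i / fact i * D i x" for i
  proof -
    have "(x-y)^i * (-1)^i = (y-x)^i" by (simp add: power_mult_distrib[symmetric])
    then show ?thesis by (simp add: Df_def)
  qed
  ultimately show ?thesis using False by simp
qed

lemma final_alg:
  fixes u v :: real
  assumes "0 \<le> u" "u \<le> 1" "\<bar>v - u\<bar> \<le> 1/2 * min u (1-u)"
  shows "1/4*u * (1-u) \<le> v * (1-v)" "v * (1-v) \<le> 9/4*u * (1-u)"
proof -
  have a: "u/2 \<le> v" "v \<le> 3*u/2" "(1-u)/2 \<le> 1 - v" "1 - v \<le> 3 * (1-u)/2"
  proof -
    have "\<bar>v - u\<bar> \<le> u/2" "\<bar>v - u\<bar> \<le> (1-u)/2" using assms(3) by (auto simp: min_def split: if_splits)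
    then show "u/2 \<le> v" "v \<le> 3*u/2" "(1-u)/2 \<le> 1 - v" "1 - v \<le> 3*(1-u)/2"
      unfolding abs_le_iff by (simp_all add: field_simps)
  qed
  have "(u/2) * ((1-u)/2) \<le> v * (1-v)"
    by (rule mult_mono) (use a assms in auto)
  then show "1/4*u * (1-u) \<le> v * (1-v)" by (simp add: algebra_simps)
  have "v * (1-v) \<le> (3*u/2) * (3 * (1-u)/2)"
    by (rule mult_mono) (use a assms in auto)
  then show "v * (1-v) \<le> 9/4*u * (1-u)" by (simp add: algebra_simps)
qed

lemma fin_le:
  fixes X Y :: ereal
  assumes "0 \<le> X" "X \<le> Y" "Y < \<infinity>"
  shows "X = ereal (real_of_ereal X)" "real_of_ereal X \<le> real_of_ereal Y" "0 \<le> real_of_ereal X"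
  using assms by (cases X; cases Y; auto)+

lemma Hsemi_bound:
  assumes "H_semi \<beta> G \<le> ereal N" "1 \<le> j" "real j < \<beta>" "x \<in> {0..1}" "G 0 x \<noteq> 0"
  shows "\<bar>G j x\<bar> powr \<beta> / \<bar>G 0 x\<bar> powr (\<beta> - j) \<le> N powr j"
proof -
  define e where "e = (SUP x\<in>{0..1}. H_ratio \<beta> (real j) (G j x) (G 0 x))"
  have "eroot e (1 / real j) \<le> H_semi \<beta> G"
    unfolding H_semi_def e_def using assms(2,3) by (intro Sup_upper) auto
  with assms(1) have er: "eroot e (1 / real j) \<le> ereal N" by simp
  have "H_ratio \<beta> (real j) (G j x) (G 0 x) \<le> e"
    unfolding e_def using assms(4) by (rule SUP_upper)
  then have r: "ereal (\<bar>G j x\<bar> powr \<beta> / \<bar>G 0 x\<bar> powr (\<beta> - j)) \<le> e"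
    using assms(5) by (simp add: H_ratio_def)
  have "e \<noteq> \<infinity>" using er by (auto simp: eroot_def)
  moreover have "0 \<le> e" by (rule order_trans[OF _ r]) simp
  ultimately obtain s where s: "e = ereal s" "0 \<le> s" by (cases e) auto
  have sN: "s powr (1 / real j) \<le> N" using er s by (simp add: eroot_def)
  have "s = (s powr (1 / real j)) powr (real j)"
    using s assms(2) by (simp add: powr_powr)
  also have "\<dots> \<le> N powr j"
    by (rule powr_mono2) (use sN in auto)
  finally show ?thesis using r s by simp
qed


lemma term_bound:
  fixes \<beta> N m d a h :: real
  assumes b: "\<beta> > 0" and N: "N > 0" and m: "m > 0" and d: "d \<ge> 0" and a: "a > 0"
    and dp: "d powr \<beta> \<le> N powr j * m powr (\<beta> - j)"
    and h: "\<bar>h\<bar> \<le> a * (m/N) powr (1/\<beta>)"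
  shows "d * \<bar>h\<bar>^j \<le> m * a^j"
proof -
  define q where "q = (m/N) powr (1/\<beta>)"
  have q0: "q > 0" using m N by (simp add: q_def)
  have "d = (d powr \<beta>) powr (1/\<beta>)" using b d by (simp add: powr_powr)
  also have "\<dots> \<le> (N powr j * m powr (\<beta> - j)) powr (1/\<beta>)"
    by (rule powr_mono2) (use b dp in auto)
  also have "\<dots> = N powr (j/\<beta>) * m powr ((\<beta> - j)/\<beta>)"
    by (simp add: powr_mult powr_powr)
  finally have d1: "d \<le> N powr (j/\<beta>) * m powr ((\<beta> - j)/\<beta>)" .
  have qj: "q^j = m powr (j/\<beta>) / N powr (j/\<beta>)"
    using q0 powr_realpow[OF q0, of j, symmetric] by (simp add: q_def powr_powr powr_divide)
  have h1: "\<bar>h\<bar>^j \<le> (a*q)^j" by (rule power_mono) (use h in \<open>auto simp: q_def\<close>)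
  have "d * \<bar>h\<bar>^j \<le> (N powr (j/\<beta>) * m powr ((\<beta> - j)/\<beta>)) * (a*q)^j"
    by (rule mult_mono) (use d1 h1 d in auto)
  also have "\<dots> = m powr ((\<beta> - j)/\<beta>) * m powr (j/\<beta>) * a^j * (N powr (j/\<beta>) / N powr (j/\<beta>))"
    by (simp add: power_mult_distrib qj)
  also have "\<dots> = m * a^j"
  proof -
    have "m powr ((\<beta> - j)/\<beta>) * m powr (j/\<beta>) = m powr 1"
    proof -
      have "(\<beta> - j)/\<beta> + j/\<beta> = 1" using b by (simp add: field_simps)
      then show ?thesis by (simp add: powr_add[symmetric])
    qed
    then show ?thesis using N m by simp
  qed
  finally show ?thesis .
qed

lemma rem_bound:
  fixes \<beta> N m L a h :: real
  assumes b: "\<beta> > 0" and N: "N > 0" and m: "m > 0" and L: "0 \<le> L" "L \<le> N" and a: "a > 0"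
    and h: "\<bar>h\<bar> \<le> a * (m/N) powr (1/\<beta>)"
  shows "L * \<bar>h\<bar> powr \<beta> \<le> m * a powr \<beta>"
proof -
  have "\<bar>h\<bar> powr \<beta> \<le> (a * (m/N) powr (1/\<beta>)) powr \<beta>"
    by (rule powr_mono2) (use b h in auto)
  also have "\<dots> = a powr \<beta> * (m / N)"
    using b m N by (simp add: powr_mult powr_powr)
  finally have h1: "\<bar>h\<bar> powr \<beta> \<le> a powr \<beta> * (m / N)" .
  have "L * \<bar>h\<bar> powr \<beta> \<le> N * (a powr \<beta> * (m / N))"
    by (rule mult_mono) (use L h1 in auto)
  also have "\<dots> = m * a powr \<beta>" using N by simp
  finally show ?thesis .
qed

lemma exp_partial:
  fixes a :: real assumes "0 \<le> a"
  shows "(\<Sum>i\<le>k. a^i / fact i) \<le> exp a"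
proof -
  have s: "(\<lambda>n. a^n / fact n) sums exp a"
    using exp_converges[of a] by (simp add: divide_inverse mult.commute)
  have "(\<Sum>i\<le>k. a^i / fact i) \<le> suminf (\<lambda>n. a^n / fact n)"
    by (rule sum_le_suminf[OF sums_summable[OF s]]) (use assms in auto)
  then show ?thesis using sums_unique[OF s] by simp
qed

lemma ereal_parts:
  fixes a b c d e :: ereal
  assumes "0 \<le> a" "0 \<le> b" "0 \<le> c" "0 \<le> d" "0 \<le> e"
  shows "a \<le> a+b+c+d+e" "b \<le> a+b+c+d+e" "c \<le> a+b+c+d+e" "d \<le> a+b+c+d+e" "e \<le> a+b+c+d+e"
    "0 \<le> a+b+c+d+e"
  using assms by (simp_all add: add_increasing add_increasing2 add_nonneg_nonneg)


theorem lemmaB4: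
  fixes \<beta> a x h :: real and f :: "real \<Rightarrow> real" and D :: "nat \<Rightarrow> real \<Rightarrow> real"
  assumes "\<beta> > 0"
    and "in_HB \<beta> f D"
    and "a > 0"
    and "(exp a - 1) + a powr \<beta> / fact (flr \<beta>) \<le> 1/2"
    and "x \<in> {0..1}" and "x + h \<in> {0..1}"
    and "\<bar>h\<bar> \<le> a * (min (f x) (1 - f x) / real_of_ereal (HB_norm \<beta> D)) powr (1 / \<beta>)"
  shows "\<bar>f (x + h) - f x\<bar> = \<bar>(1 - f x) - (1 - f (x + h))\<bar>
    \<and> \<bar>f (x + h) - f x\<bar> \<le> (1/2) * min (f x) (1 - f x)
    \<and> (1/4) * f x * (1 - f x) \<le> f (x + h) * (1 - f (x + h))
    \<and> f (x + h) * (1 - f (x + h)) \<le> (9/4) * f x * (1 - f x)"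
proof -
  note b = assms(1) and a = assms(3) and ac = assms(4) and x = assms(5)
  define k where "k = flr \<beta>"
  define N where "N = real_of_ereal (HB_norm \<beta> D)"
  define m where "m = min (f x) (1 - f x)"
  define y where "y = x + h"
  define P where "P = {(x,y). x\<in>{0..1::real} \<and> y\<in>{0..1} \<and> x \<noteq> y}"
  define Hol where "Hol = (SUP p\<in>P. ereal (\<bar>D k (fst p) - D k (snd p)\<bar> / \<bar>fst p - snd p\<bar> powr (\<beta> - real k)))"
  have y: "y \<in> {0..1}" using assms(6) by (simp add: y_def)
  have dv: "derivs_on D k f" and f01: "\<forall>x\<in>{0..1}. f x \<in> {0..1}" and fin: "HB_norm \<beta> D < \<infinity>"
    using assms(2) by (auto simp: in_HB_def k_def)
  have D0: "\<And>t. t\<in>{0..1} \<Longrightarrow> D 0 t = f t"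
    and der: "\<And>j t. j<k \<Longrightarrow> t\<in>{0..1} \<Longrightarrow> (D j has_real_derivative D (Suc j) t) (at t within {0..1})"
    using dv by (auto simp: derivs_on_def)
  have kb: "real k < \<beta>"
  proof -
    have "1 \<le> \<lceil>\<beta>\<rceil>" using b by simp
    then have "real k = of_int \<lceil>\<beta>\<rceil> - 1" by (simp add: k_def flr_def)
    then show ?thesis using ceiling_correct[of \<beta>] by simp
  qed
  have sn0: "0 \<le> sup_norm g" for g
    unfolding sup_norm_def by (rule order_trans[OF _ SUP_upper[of 0]]) auto
  have Hol0: "0 \<le> Hol"
    unfolding Hol_def by (rule order_trans[OF _ SUP_upper[of "(0,1)"]]) (auto simp: P_def)
  have Hs0: "0 \<le> H_semi \<beta> G" for G
    unfolding H_semi_def by (rule Sup_upper) auto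
  have HB: "HB_norm \<beta> D = sup_norm (D 0) + sup_norm (D k) + Hol + H_semi \<beta> D + H_semi \<beta> (one_minus D)"
    by (simp add: HB_norm_def C_norm_def Hol_def P_def k_def)
  note parts = ereal_parts[OF sn0[of "D 0"] sn0[of "D k"] Hol0 Hs0[of D] Hs0[of "one_minus D"], folded HB]
  have HBe: "HB_norm \<beta> D = ereal N" and N0: "0 \<le> N"
    using fin_le[OF parts(6) order_refl fin] by (simp_all add: N_def)
  obtain L where L: "Hol = ereal L" "0 \<le> L" "L \<le> N"
    using fin_le[OF Hol0 parts(3) fin] N_def by metis
  have sup0: "\<bar>f t\<bar> \<le> N" if "t \<in> {0..1}" for t
  proof -
    have "ereal \<bar>D 0 t\<bar> \<le> sup_norm (D 0)" unfolding sup_norm_def by (rule SUP_upper) (use that in auto)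
    also have "\<dots> \<le> ereal N" using parts(1) HBe by simp
    finally show ?thesis using D0[OF that] by simp
  qed
  have H1: "H_semi \<beta> D \<le> ereal N" using parts(4) HBe by simp
  have H2: "H_semi \<beta> (one_minus D) \<le> ereal N" using parts(5) HBe by simp
  have hold: "\<bar>D k s - D k t\<bar> \<le> L * \<bar>s - t\<bar> powr (\<beta> - k)" if st: "s\<in>{0..1}" "t\<in>{0..1}" for s t
  proof (cases "s = t")
    case True then show ?thesis using L by simp
  next
    case False
    have "ereal (\<bar>D k s - D k t\<bar> / \<bar>s - t\<bar> powr (\<beta> - real k)) \<le> Hol"
      unfolding Hol_def using SUP_upper[of "(s,t)" P "\<lambda>p. ereal (\<bar>D k (fst p) - D k (snd p)\<bar> / \<bar>fst p - snd p\<bar> powr (\<beta> - real k))"] st False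
      by (auto simp: P_def)
    then have "\<bar>D k s - D k t\<bar> / \<bar>s - t\<bar> powr (\<beta> - real k) \<le> L" using L by simp
    moreover have "\<bar>s - t\<bar> powr (\<beta> - real k) > 0" using False by simp
    ultimately show ?thesis by (simp add: divide_le_eq mult.commute)
  qed
  have fx: "0 \<le> f x" "f x \<le> 1" using f01 x by auto
  have fy: "0 \<le> f y" "f y \<le> 1" using f01 y by auto
  have m0: "0 \<le> m" using fx by (simp add: m_def)
  have hq: "\<bar>h\<bar> \<le> a * (m/N) powr (1/\<beta>)" using assms(7) by (simp add: m_def N_def)
  have key: "\<bar>f y - f x\<bar> \<le> m/2"
  proof (cases "m > 0 \<and> N > 0")
    case False
    then have "m / N = 0" using m0 N0 by auto
    then have "h = 0" using hq by (metis abs_le_zero_iff mult_zero_right powr_0)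
    then show ?thesis using m0 by (simp add: y_def)
  next
    case True
    then have mp: "m > 0" and Np: "N > 0" by auto
    have rem: "L * \<bar>h\<bar> powr \<beta> \<le> m * a powr \<beta>"
      by (rule rem_bound[OF b Np mp L(2,3) a hq])
    have e1: "1 \<le> exp a" using a by simp
    show ?thesis
    proof (cases "k = 0")
      case True
      have "\<bar>f y - f x\<bar> = \<bar>D k y - D k x\<bar>" using D0 x y True by simp
      also have "\<dots> \<le> L * \<bar>h\<bar> powr \<beta>" using hold[OF y x] True by (simp add: y_def)
      also have "\<dots> \<le> m * a powr \<beta>" by (rule rem)
      also have "\<dots> \<le> m * (1/2)"
      proof -
        have ac': "exp a - 1 + a powr \<beta> \<le> 1/2" using ac True by (simp add: k_def)
        have "a powr \<beta> \<le> 1/2" using ac' e1 by linarith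
        then show ?thesis using mp by (intro mult_left_mono) auto
      qed
      finally show ?thesis by simp
    next
      case False
      then have kp: "k > 0" by simp
      define \<gamma> where "\<gamma> = \<beta> - real k"
      have gp: "\<gamma> > 0" using kb by (simp add: \<gamma>_def)
      define g where "g i = (y-x)^i / fact i * D i x" for i
      have T: "\<bar>D 0 y - (\<Sum>i\<le>k. g i)\<bar> \<le> (L * \<bar>h\<bar> powr \<gamma>) * \<bar>y-x\<bar>^k / fact k"
        unfolding g_def
      proof (rule taylor_two[where D=D, OF kp der x y])
        fix t assume t: "t \<in> {0..1}" "\<bar>t - x\<bar> \<le> \<bar>y - x\<bar>"
        have "\<bar>D k t - D k x\<bar> \<le> L * \<bar>t - x\<bar> powr \<gamma>" using hold[OF t(1) x] by (simp add: \<gamma>_def)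
        also have "\<dots> \<le> L * \<bar>h\<bar> powr \<gamma>"
          using t(2) gp L(2) by (intro mult_left_mono powr_mono2) (auto simp: y_def)
        finally show "\<bar>D k t - D k x\<bar> \<le> L * \<bar>h\<bar> powr \<gamma>" .
      qed auto
      have hk: "\<bar>h\<bar> powr \<gamma> * \<bar>h\<bar>^k = \<bar>h\<bar> powr \<beta>"
      proof (cases "h = 0")
        case True then show ?thesis using kp by simp
      next
        case False
        then have "\<bar>h\<bar>^k = \<bar>h\<bar> powr real k" by (simp add: powr_realpow)
        then show ?thesis by (simp add: \<gamma>_def powr_add[symmetric])
      qed
      have R: "(L * \<bar>h\<bar> powr \<gamma>) * \<bar>y-x\<bar>^k / fact k \<le> m * a powr \<beta> / fact k"
      proof -
        have "(L * \<bar>h\<bar> powr \<gamma>) * \<bar>y-x\<bar>^k = L * \<bar>h\<bar> powr \<beta>"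
          using hk by (simp add: y_def mult.assoc)
        then show ?thesis using rem by (metis divide_right_mono fact_ge_zero)
      qed
      have spl: "(\<Sum>i\<le>k. g i) = D 0 x + (\<Sum>i\<in>{1..k}. g i)"
      proof -
        have "(\<Sum>i\<le>k. g i) = (\<Sum>i\<in>{0..k}. g i)" by (simp add: atMost_atLeast0)
        also have "\<dots> = g 0 + (\<Sum>i\<in>{Suc 0..k}. g i)" by (rule sum.atLeast_Suc_atMost) simp
        finally show ?thesis by (simp add: g_def)
      qed
      have termb: "\<bar>g i\<bar> \<le> m * a^i / fact i" if i: "i \<in> {1..k}" for i
      proof -
        have ib: "real i < \<beta>" using i kb by auto
        have i1: "1 \<le> i" using i by auto
        have dp: "\<bar>D i x\<bar> powr \<beta> \<le> N powr i * m powr (\<beta> - i)"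
        proof (cases "m = f x")
          case True
          have nz: "D 0 x \<noteq> 0" using D0[OF x] True mp by simp
          have "\<bar>D i x\<bar> powr \<beta> / \<bar>D 0 x\<bar> powr (\<beta> - i) \<le> N powr i"
            by (rule Hsemi_bound[OF H1 i1 ib x nz])
          moreover have "\<bar>D 0 x\<bar> powr (\<beta> - i) > 0" using nz by simp
          ultimately show ?thesis using D0[OF x] True fx by (simp add: divide_le_eq)
        next
          case False
          then have mm: "m = 1 - f x" by (simp add: m_def min_def split: if_splits)
          have nz: "one_minus D 0 x \<noteq> 0" using D0[OF x] mm mp by (simp add: one_minus_def)
          have "\<bar>one_minus D i x\<bar> powr \<beta> / \<bar>one_minus D 0 x\<bar> powr (\<beta> - i) \<le> N powr i"
            by (rule Hsemi_bound[OF H2 i1 ib x nz])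
          moreover have "\<bar>one_minus D 0 x\<bar> powr (\<beta> - i) > 0" using nz by simp
          ultimately show ?thesis using D0[OF x] mm fx i1 by (simp add: divide_le_eq one_minus_def)
        qed
        have "\<bar>D i x\<bar> * \<bar>h\<bar>^i \<le> m * a^i"
          by (rule term_bound[OF b Np mp _ a dp hq]) simp
        then show ?thesis
          by (simp add: g_def abs_mult power_abs y_def divide_right_mono mult.commute)
      qed
      have sumb: "\<bar>\<Sum>i\<in>{1..k}. g i\<bar> \<le> m * (\<Sum>i\<in>{1..k}. a^i / fact i)"
      proof -
        have "\<bar>\<Sum>i\<in>{1..k}. g i\<bar> \<le> (\<Sum>i\<in>{1..k}. \<bar>g i\<bar>)" by (rule sum_abs)
        also have "\<dots> \<le> (\<Sum>i\<in>{1..k}. m * a^i / fact i)" by (rule sum_mono) (rule termb)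
        also have "\<dots> = m * (\<Sum>i\<in>{1..k}. a^i / fact i)" by (simp add: sum_distrib_left)
        finally show ?thesis .
      qed
      have expb: "(\<Sum>i\<in>{1..k}. a^i / fact i) \<le> exp a - 1"
      proof -
        have "(\<Sum>i\<le>k. a^i / fact i) = (\<Sum>i\<in>{0..k}. a^i / fact i)" by (simp add: atMost_atLeast0)
        also have "\<dots> = 1 + (\<Sum>i\<in>{Suc 0..k}. a^i / fact i)" by (subst sum.atLeast_Suc_atMost) simp_all
        finally show ?thesis using exp_partial[of a k] a by simp
      qed
      have "\<bar>f y - f x\<bar> = \<bar>(D 0 y - (\<Sum>i\<le>k. g i)) + (\<Sum>i\<in>{1..k}. g i)\<bar>"
        using D0 x y spl by simp
      also have "\<dots> \<le> \<bar>D 0 y - (\<Sum>i\<le>k. g i)\<bar> + \<bar>\<Sum>i\<in>{1..k}. g i\<bar>" by (rule abs_triangle_ineq)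
      also have "\<dots> \<le> m * a powr \<beta> / fact k + m * (exp a - 1)"
        using T R sumb expb mp by (smt (verit) mult_left_mono)
      also have "\<dots> = m * ((exp a - 1) + a powr \<beta> / fact (flr \<beta>))" by (simp add: k_def algebra_simps)
      also have "\<dots> \<le> m * (1/2)" by (rule mult_left_mono[OF ac]) (use mp in auto)
      finally show ?thesis by simp
    qed
  qed
  have fin1: "1/4*f x * (1-f x) \<le> f y * (1-f y)" "f y * (1-f y) \<le> 9/4*f x * (1-f x)"
    using final_alg[OF fx, of "f y"] key by (simp_all add: m_def)
  show ?thesis using key fin1 by (simp add: y_def m_def)
qed

end
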